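(* For any finite alphabet $\mathfrak{G}$, the initial path series of $(\mathbf{S}_\bullet(\mathfrak{G}), \mathbf{U})$ satisfies $\langle t^d, \mathbf{I}_\mathbf{U}\rangle = \sum_{n\in[1+(m_\mathfrak{G}-1)d]} \theta(d,n)$ for any $d\geq 0$, where $\theta(d,n)$ satisfies the recurrence $\theta(d,n)=0$ for any $n\leq 0$ and $d\in\mathbb{Z}$, $\theta(0,1)=1$, and $\theta(d,n) = \sum_{\mathtt{a}\in\mathfrak{G},\, |\mathtt{a}|\leq n} (n+1-|\mathtt{a}|)\,\theta(d-1, n+1-|\mathtt{a}|)$ for any $d\geq 1$ and $n\geq 1$.
   Context: $\mathfrak{G}$ is a finite alphabet (letters with arities $\geq 1$), and $m_\mathfrak{G}$ is the maximal arity of a letter of $\mathfrak{G}$. A $\mathfrak{G}$-tree is either the leaf (the tree with no internal node) or a root decorated by a letter $\mathtt{a}\in\mathfrak{G}$ with $|\mathtt{a}|$ children that are $\mathfrak{G}$-trees; its degree is its number of internal nodes and its arity $|\mathfrak{t}|$ its number of leaves. $\mathbf{S}_\bullet(\mathfrak{G})$ is the set of $\mathfrak{G}$-trees graded by degree. $\mathbf{U}(\mathfrak{t}) = \sum_{\mathtt{a}\in\mathfrak{G},\, i\in[|\mathfrak{t}|]} \mathfrak{t}\circ_i\mathtt{a}$, where $\mathfrak{t}\circ_i\mathtt{a}$ replaces the $i$-th leaf of $\mathfrak{t}$ by an internal node decorated by $\mathtt{a}$ with only leaves as children; this graded graph has the leaf as root. The initial path series is $\mathbf{I}_\mathbf{U}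 = \sum_{\mathfrak{t}} \langle\mathfrak{t},\mathbf{H}_\mathbf{U}\rangle\, t^{\deg(\mathfrak{t})}$, where $\langle\mathfrak{t},\mathbf{H}_\mathbf{U}\rangle$ is the number of paths from the leaf to $\mathfrak{t}$ in this graph; so $\langle t^d,\mathbf{I}_\mathbf{U}\rangle$ is the number of paths of length $d$ starting at the leaf. (In the proof, $\theta(d,n)$ is the number of such paths ending at trees of degree $d$ and arity $n$.) *)

theory Defs
  imports Main
begin

text \<open>An alphabet is a finite set G of letters together with an arity function ar
  (arities \<ge> 1). G-trees: a leaf, or a node decorated by a letter with a list of children.\<close>

datatype 'a tree = Leaf | Node 'a "'a tree list"

fun leaves :: "'a tree \<Rightarrow> nat" where
  "leaves Leaf = 1"
| "leaves (Node a ts) = sum_list (map leaves ts)"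

fun degree :: "'a tree \<Rightarrow> nat" where
  "degree Leaf = 0"
| "degree (Node a ts) = Suc (sum_list (map degree ts))"

fun wf_tree :: "'a set \<Rightarrow> ('a \<Rightarrow> nat) \<Rightarrow> 'a tree \<Rightarrow> bool" where
  "wf_tree G ar Leaf = True"
| "wf_tree G ar (Node a ts) = (a \<in> G \<and> length ts = ar a \<and> (\<forall>t\<in>set ts. wf_tree G ar t))"

definition corolla :: "('a \<Rightarrow> nat) \<Rightarrow> 'a \<Rightarrow> 'a tree" where
  "corolla ar a = Node a (replicate (ar a) Leaf)"

text \<open>graft s i t replaces the i-th leaf of t (leaves numbered 0,1,... from left to right)
  by s. Thus graft (corolla ar a) i t is t \<circ>_(i+1) a.\<close>
fun graft :: "'a tree \<Rightarrow> nat \<Rightarrow> 'a tree \<Rightarrow> 'a tree"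
and graft_list :: "'a tree \<Rightarrow> nat \<Rightarrow> 'a tree list \<Rightarrow> 'a tree list" where
  "graft s i Leaf = (if i = 0 then s else Leaf)"
| "graft s i (Node a ts) = Node a (graft_list s i ts)"
| "graft_list s i [] = []"
| "graft_list s i (t # ts) =
     (if i < leaves t then graft s i t # ts else t # graft_list s (i - leaves t) ts)"

text \<open>A path in the graded graph U starting at the leaf is a sequence of edges; an edge out of
  t is a choice of a letter a \<in> G and a leaf position i of t (the target being t \<circ>_i a).
  Edges are counted with multiplicity, as U(t) is a formal sum. We encode a path by the list of
  choices (a, i).\<close>
definition path_end :: "('a \<Rightarrow> nat) \<Rightarrow> ('a \<times> nat) list \<Rightarrow> 'a tree" where
  "path_end ar cs = foldl (\<lambda>t (a, i). graft (corolla ar a) i t) Leaf cs"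

definition valid_path :: "'a set \<Rightarrow> ('a \<Rightarrow> nat) \<Rightarrow> ('a \<times> nat) list \<Rightarrow> bool" where
  "valid_path G ar cs =
     (\<forall>k < length cs. fst (cs ! k) \<in> G \<and> snd (cs ! k) < leaves (path_end ar (take k cs)))"

text \<open>Coefficient of t^d in the initial path series I_U: number of paths of length d from the leaf.\<close>
definition init_path_coeff :: "'a set \<Rightarrow> ('a \<Rightarrow> nat) \<Rightarrow> nat \<Rightarrow> nat" where
  "init_path_coeff G ar d = card {cs. length cs = d \<and> valid_path G ar cs}"

definition max_arity :: "'a set \<Rightarrow> ('a \<Rightarrow> nat) \<Rightarrow> nat" where
  "max_arity G ar = (if G = {} then 0 else Max (ar ` G))"

text \<open>theta d n, defined by the recurrence; n is a natural number, theta d 0 = 0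
  (the values for n \<le> 0 are 0).\<close>
fun theta :: "'a set \<Rightarrow> ('a \<Rightarrow> nat) \<Rightarrow> nat \<Rightarrow> nat \<Rightarrow> nat" where
  "theta G ar 0 n = (if n = 1 then 1 else 0)"
| "theta G ar (Suc d) n =
     (if n = 0 then 0
      else (\<Sum>a \<in> {a \<in> G. ar a \<le> n}. (n + 1 - ar a) * theta G ar d (n + 1 - ar a)))"

end

theory Submission
  imports Defs
begin

lemma leaves_graft:
 "i < leaves t \<Longrightarrow> leaves (graft s i t) = leaves t + leaves s - 1"
 "i < sum_list (map leaves ts) \<Longrightarrow> sum_list (map leaves (graft_list s i ts)) = sum_list (map leaves ts) + leaves s - 1"
  by (induction s i t and s i ts rule: graft_graft_list.induct) auto

lemma leaves_corolla[simp]: "leaves (corolla ar a) = ar a"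
  by (simp add: corolla_def sum_list_replicate)

lemma path_end_snoc: "path_end ar (cs @ [(a,i)]) = graft (corolla ar a) i (path_end ar cs)"
  by (simp add: path_end_def)

lemma path_end_Nil[simp]: "path_end ar [] = Leaf"
  by (simp add: path_end_def)

lemma valid_snoc: "valid_path G ar (cs @ [(a,i)]) \<longleftrightarrow>
   valid_path G ar cs \<and> a \<in> G \<and> i < leaves (path_end ar cs)"
  unfolding valid_path_def
  by (auto simp: nth_append less_Suc_eq)

lemma valid_Nil[simp]: "valid_path G ar []"
  by (simp add: valid_path_def)

definition T :: "'a set \<Rightarrow> ('a \<Rightarrow> nat) \<Rightarrow> nat \<Rightarrow> nat \<Rightarrow> ('a \<times> nat) list set" where
  "T G ar d n = {cs. length cs = d \<and> valid_path G ar cs \<and> leaves (path_end ar cs) = n}"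

lemma leaves_pos:
  assumes "\<forall>a \<in> G. ar a \<ge> 1" "valid_path G ar cs"
  shows "leaves (path_end ar cs) \<ge> 1"
  using assms(2)
proof (induction cs rule: rev_induct)
  case Nil then show ?case by simp
next
  case (snoc x cs)
  obtain a i where x: "x = (a,i)" by force
  with snoc show ?case using assms(1)
    by (auto simp: valid_snoc path_end_snoc leaves_graft)
qed


lemma T_zero: "T G ar 0 n = (if n = 1 then {[]} else {})"
  by (auto simp: T_def)

lemma T_Suc_0:
  assumes "\<forall>a \<in> G. ar a \<ge> 1"
  shows "T G ar d 0 = {}"
  using leaves_pos[OF assms] by (force simp: T_def)

lemma T_Suc:
  assumes ar: "\<forall>a \<in> G. ar a \<ge> 1" and n: "n \<ge> 1"
  shows "T G ar (Suc d) n = (\<Union>a\<in>{a\<in>G. ar a \<le> n}.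
     (\<lambda>(cs,i). cs @ [(a,i)]) ` (T G ar d (n+1-ar a) \<times> {..<n+1-ar a}))" (is "?L = ?R")
proof
  show "?L \<subseteq> ?R"
  proof
    fix xs assume xs: "xs \<in> ?L"
    then have "xs \<noteq> []" by (auto simp: T_def)
    then obtain cs a i where xsd: "xs = cs @ [(a,i)]"
      by (metis rev_exhaust surj_pair)
    let ?m = "leaves (path_end ar cs)"
    from xs xsd have v: "valid_path G ar cs" "a \<in> G" "i < ?m" and l: "length cs = d"
      and e: "leaves (graft (corolla ar a) i (path_end ar cs)) = n"
      by (auto simp: T_def valid_snoc path_end_snoc)
    from e v have "?m + ar a - 1 = n" by (simp add: leaves_graft)
    moreover have "ar a \<ge> 1" using ar v by auto
    ultimately have "ar a \<le> n" "?m = n + 1 - ar a" using v by auto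
    then show "xs \<in> ?R" using v l xsd
      by (auto simp: T_def intro!: bexI[of _ a] image_eqI[of _ _ "(cs,i)"])
  qed
next
  show "?R \<subseteq> ?L"
  proof
    fix xs assume "xs \<in> ?R"
    then obtain a cs i where a: "a \<in> G" "ar a \<le> n" and cs: "cs \<in> T G ar d (n+1-ar a)"
      and i: "i < n+1-ar a" and xsd: "xs = cs @ [(a,i)]" by auto
    have "ar a \<ge> 1" using ar a by auto
    with cs i a xsd n show "xs \<in> ?L"
      by (auto simp: T_def valid_snoc path_end_snoc leaves_graft)
  qed
qed

lemma sub_empty: "A \<subseteq> B \<Longrightarrow> B = {} \<Longrightarrow> A = {}" by blast

lemma T_card:
  assumes G: "finite G" and ar: "\<forall>a \<in> G. ar a \<ge> 1"
  shows "finite (T G ar d n) \<and> card (T G ar d n) = theta G ar d n"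
proof (induction d arbitrary: n)
  case 0 then show ?case by (simp add: T_zero)
next
  case (Suc d)
  show ?case
  proof (cases "n = 0")
    case True then show ?thesis using T_Suc_0[OF ar] by simp
  next
    case False
    let ?A = "{a\<in>G. ar a \<le> n}"
    let ?f = "\<lambda>a. (\<lambda>(cs,i). cs @ [(a,i)]) ` (T G ar d (n+1-ar a) \<times> {..<n+1-ar a})"
    have eq: "T G ar (Suc d) n = (\<Union>a\<in>?A. ?f a)" using T_Suc[OF ar] False by simp
    have fA: "finite ?A" using G by simp
    have ff: "\<forall>a\<in>?A. finite (?f a)"
      by (intro ballI finite_imageI finite_cartesian_product conjunct1[OF Suc.IH] finite_lessThan)
    have sub: "?f a \<subseteq> {xs. fst (last xs) = a}" for a :: 'a by (simp add: image_subset_iff split_beta)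
    have disj: "\<forall>a\<in>?A. \<forall>b\<in>?A. a \<noteq> b \<longrightarrow> ?f a \<inter> ?f b = {}"
    proof (intro ballI impI)
      fix a b :: 'a assume "a \<noteq> b"
      have "?f a \<inter> ?f b \<subseteq> {xs. fst (last xs) = a} \<inter> {xs. fst (last xs) = b}"
        by (rule Int_mono[OF sub sub])
      moreover have "{xs. fst (last xs) = a} \<inter> {xs. fst (last xs) = (b::'a)} = ({}::('a\<times>nat) list set)"
        using \<open>a \<noteq> b\<close> by auto
      ultimately show "?f a \<inter> ?f b = {}" by (rule sub_empty)
    qed
    have inj: "inj_on (\<lambda>(cs,i). cs @ [(a,i)]) X" for a :: 'a and X
      by (auto simp: inj_on_def)
    have cf: "card (?f a) = (n + 1 - ar a) * theta G ar d (n + 1 - ar a)" for a :: 'a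
    proof -
      have "card (?f a) = card (T G ar d (n+1-ar a)) * (n+1-ar a)"
        by (simp add: card_image[OF inj] card_cartesian_product)
      then show ?thesis using conjunct2[OF Suc.IH, of "n+1-ar a"] by (simp only: mult.commute)
    qed
    have "card (T G ar (Suc d) n) = (\<Sum>a\<in>?A. card (?f a))"
      unfolding eq by (rule card_UN_disjoint[OF fA ff disj])
    also have "\<dots> = theta G ar (Suc d) n" using False cf by simp
    moreover have "finite (T G ar (Suc d) n)"
      unfolding eq using ff by (intro finite_UN_I[OF fA]) auto
    ultimately show ?thesis by simp
  qed
qed

lemma leaves_bound:
  assumes G: "finite G" and "valid_path G ar cs"
  shows "leaves (path_end ar cs) \<le> 1 + (max_arity G ar - 1) * length cs"
  using assms(2)
proof (induction cs rule: rev_induct)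
  case Nil then show ?case by simp
next
  case (snoc x cs)
  obtain a i where x: "x = (a,i)" by force
  from snoc x have v: "valid_path G ar cs" "a \<in> G" "i < leaves (path_end ar cs)"
    by (auto simp: valid_snoc)
  have "ar a \<le> max_arity G ar" using v G by (auto simp: max_arity_def)
  moreover have "(max_arity G ar - 1) * length (cs @ [x]) = (max_arity G ar - 1) * length cs + (max_arity G ar - 1)"
    by simp
  moreover have "leaves (path_end ar (cs @ [x])) = leaves (path_end ar cs) + ar a - 1"
    using v x by (simp add: path_end_snoc leaves_graft)
  ultimately show ?case using snoc.IH[OF v(1)] v
    by linarith
qed

theorem proposition2p3:
  fixes G :: "'a set" and ar :: "'a \<Rightarrow> nat" and d :: nat
  assumes "finite G"
    and "\<forall>a \<in> G. ar a \<ge> 1"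
  shows "init_path_coeff G ar d = (\<Sum>n = 1..1 + (max_arity G ar - 1) * d. theta G ar d n)"
proof -
  let ?I = "{1..1 + (max_arity G ar - 1) * d}"
  have eq: "{cs. length cs = d \<and> valid_path G ar cs} = (\<Union>n\<in>?I. T G ar d n)"
    using leaves_pos[OF assms(2)] leaves_bound[OF assms(1)]
    by (fastforce simp: T_def)
  have "init_path_coeff G ar d = card (\<Union>n\<in>?I. T G ar d n)"
    unfolding init_path_coeff_def eq ..
  also have "\<dots> = (\<Sum>n\<in>?I. card (T G ar d n))"
  proof (rule card_UN_disjoint)
    show "finite ?I" by simp
    show "\<forall>n\<in>?I. finite (T G ar d n)" using T_card[OF assms] by blast
    show "\<forall>i\<in>?I. \<forall>j\<in>?I. i \<noteq> j \<longrightarrow> T G ar d i \<inter> T G ar d j = {}"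
      unfolding T_def by blast
  qed
  also have "\<dots> = (\<Sum>n\<in>?I. theta G ar d n)"
    using T_card[OF assms] by simp
  finally show ?thesis .
qed

end
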